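(* Let $f:\mathbb{R}^n\to(-\infty,+\infty]$ be proper, lower semicontinuous and prox-bounded with threshold $\lambda_f>0$, let $0<\lambda<\lambda_f$, and let $x\in\operatorname{dom}\partial_p^\lambda f$. Then the following are equivalent: (a) $\partial_p^\lambda f(x)$ is a singleton; (b) $\operatorname{conv}(f+\lambda^{-1}j)$ is differentiable at $x$ and $\operatorname{conv}(f+\lambda^{-1}j)(x)=(f+\lambda^{-1}j)(x)$; (c) $h_\lambda f$ is differentiable at $x$ and $h_\lambda f(x)=f(x)$.
   Context: $j:=\frac12\|\cdot\|^2$. $e_\lambda f(x):=\inf_y\{f(y)+\frac1{2\lambda}\|y-x\|^2\}$; prox-bounded with threshold $\lambda_f=\sup\{\lambda>0:e_\lambda f(x)>-\infty\text{ for some }x\}$. $v\in\partial_p^\lambda f(x)$ iff $x\in\operatorname{dom}f$ and $f(y)\ge f(x)+\langle v,y-x\rangle-\frac1{2\lambda}\|y-x\|^2$ for all $y$. $h_\lambda f:=-e_\lambda(-e_\lambda f)$ is the $\lambda$-proximal hull. $\operatorname{conv}g$ is the convex hull of the function $g$. *)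

theory Defs
  imports "HOL-Analysis.Analysis"
begin

text \<open>Extended-real-valued functions f : R^n -> [-inf,+inf], with R^n an arbitrary
  Euclidean space 'a.\<close>

definition proper_fun :: "('a \<Rightarrow> ereal) \<Rightarrow> bool" where
  "proper_fun f \<longleftrightarrow> (\<forall>x. f x \<noteq> -\<infinity>) \<and> (\<exists>x. f x \<noteq> \<infinity>)"

definition lsc_fun :: "('a::topological_space \<Rightarrow> ereal) \<Rightarrow> bool" where
  "lsc_fun f \<longleftrightarrow> (\<forall>x. f x \<le> Liminf (at x) f)"

definition fdom :: "('a \<Rightarrow> ereal) \<Rightarrow> 'a set" where
  "fdom f = {x. f x < \<infinity>}"

definition moreau_env :: "real \<Rightarrow> ('a::real_normed_vector \<Rightarrow> ereal) \<Rightarrow> 'a \<Rightarrow> ereal" where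
  "moreau_env lam f x = (INF y. f y + ereal ((norm (y - x))\<^sup>2 / (2 * lam)))"

text \<open>Prox-boundedness threshold lambda_f (sup of the empty set is taken as 0 here,
  i.e. lambda_f > 0 encodes prox-boundedness).\<close>
definition prox_threshold :: "('a::real_normed_vector \<Rightarrow> ereal) \<Rightarrow> ereal" where
  "prox_threshold f = Sup {ereal lam | lam. lam > 0 \<and> (\<exists>x. moreau_env lam f x > -\<infinity>)}"

definition prox_hull :: "real \<Rightarrow> ('a::real_normed_vector \<Rightarrow> ereal) \<Rightarrow> 'a \<Rightarrow> ereal" where
  "prox_hull lam f = (\<lambda>x. - moreau_env lam (\<lambda>y. - moreau_env lam f y) x)"

definition prox_subdiff :: "real \<Rightarrow> ('a::real_inner \<Rightarrow> ereal) \<Rightarrow> 'a \<Rightarrow> 'a set" where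
  "prox_subdiff lam f x = {v. x \<in> fdom f \<and>
     (\<forall>y. f y \<ge> f x + ereal (inner v (y - x) - (norm (y - x))\<^sup>2 / (2 * lam)))}"

definition ereal_convex :: "('a::real_vector \<Rightarrow> ereal) \<Rightarrow> bool" where
  "ereal_convex g \<longleftrightarrow> convex {(x, t::real). g x \<le> ereal t}"

definition conv_fun :: "('a::real_vector \<Rightarrow> ereal) \<Rightarrow> 'a \<Rightarrow> ereal" where
  "conv_fun g x = Sup {h x | h. ereal_convex h \<and> (\<forall>y. h y \<le> g y)}"

definition ereal_differentiable_at :: "('a::real_normed_vector \<Rightarrow> ereal) \<Rightarrow> 'a \<Rightarrow> bool" where
  "ereal_differentiable_at g x \<longleftrightarrow>
     (\<exists>e>0. \<forall>y\<in>ball x e. \<bar>g y\<bar> \<noteq> \<infinity>) \<and> (\<lambda>y. real_of_ereal (g y)) differentiable (at x)"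

end

theory Submission
  imports Defs
begin

lemma ray_mono:
  fixes r :: "'a::real_vector \<Rightarrow> ereal"
  assumes cvx: "convex {(h,t). r h \<le> ereal t}" and r0: "r 0 = 0"
    and s1: "s1 > 0" "r (s1 *\<^sub>R d) \<le> ereal (e * s1)" and t: "0 < t" "t \<le> s1"
  shows "r (t *\<^sub>R d) \<le> ereal (e * t)"
proof -
  have p: "(s1 *\<^sub>R d, e * s1) \<in> {(h,t). r h \<le> ereal t}" using s1 by simp
  have q: "(0, 0) \<in> {(h,t). r h \<le> ereal t}" using r0 by simp
  have "(t/s1) *\<^sub>R (s1 *\<^sub>R d, e * s1) + (1 - t/s1) *\<^sub>R (0,0) \<in> {(h,t). r h \<le> ereal t}"
    by (rule convexD[OF cvx p q]) (use s1 t in auto)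
  moreover have "(t/s1) *\<^sub>R (s1 *\<^sub>R d, e * s1) + (1 - t/s1) *\<^sub>R ((0::'a),(0::real)) = (t *\<^sub>R d, e * t)"
    using s1 by auto
  ultimately show ?thesis using s1 by (auto simp: mult.commute)
qed

lemma convex_affine_epi: "convex {(y::'a::real_inner, t::real). inner b y + \<beta> \<le> t}"
proof -
  have "{(y::'a, t::real). inner b y + \<beta> \<le> t} = {z. inner (-b, 1::real) z \<ge> \<beta>}"
    by (auto simp: algebra_simps)
  then show ?thesis using convex_halfspace_ge by metis
qed

lemma ray_exists:
  fixes r :: "'a::euclidean_space \<Rightarrow> ereal"
  assumes cvx: "convex {(h,t). r h \<le> ereal t}" and r0: "r 0 = 0"
    and nonneg: "\<forall>h. r h \<ge> 0"
    and uniq: "\<forall>w. (\<forall>h. ereal (inner w h) \<le> r h) \<longrightarrow> w = 0"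
    and e: "e > 0"
  shows "\<exists>s>0. r (s *\<^sub>R d) \<le> ereal (e * s)"
proof (rule ccontr)
  assume "\<not> ?thesis"
  hence big: "\<And>s. s > 0 \<Longrightarrow> r (s *\<^sub>R d) > ereal (e * s)" by (auto simp: not_le)
  define K where "K = {(s *\<^sub>R d, t) | s t. s > 0 \<and> t \<le> e * s}"
  define E where "E = {(h,t). r h \<le> ereal t}"
  have cK: "convex K"
  proof (rule convexI)
    fix p q :: "'a \<times> real" and u v :: real
    assume p: "p \<in> K" and q: "q \<in> K" and u: "0 \<le> u" and v: "0 \<le> v" and uv: "u + v = 1"
    obtain s1 t1 where 1: "p = (s1 *\<^sub>R d, t1)" "s1 > 0" "t1 \<le> e * s1" using p K_def by auto
    obtain s2 t2 where 2: "q = (s2 *\<^sub>R d, t2)" "s2 > 0" "t2 \<le> e * s2" using q K_def by auto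
    have pos: "u * s1 + v * s2 > 0"
    proof (cases "u = 0")
      case True then show ?thesis using uv 2 by simp
    next
      case False then have "u > 0" using u by simp
      then show ?thesis using 1 2 v by (simp add: add_pos_nonneg)
    qed
    have "u * t1 + v * t2 \<le> e * (u * s1 + v * s2)"
      using mult_left_mono[OF 1(3) u] mult_left_mono[OF 2(3) v] by (simp add: algebra_simps)
    moreover have "u *\<^sub>R p + v *\<^sub>R q = ((u * s1 + v * s2) *\<^sub>R d, u * t1 + v * t2)"
      using 1 2 by (simp add: algebra_simps)
    ultimately show "u *\<^sub>R p + v *\<^sub>R q \<in> K" using pos unfolding K_def by blast
  qed
  have cE: "convex E" using cvx E_def by simp
  have "\<exists>s t. (d, e) = (s *\<^sub>R d, t) \<and> s > 0 \<and> t \<le> e * s"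
    by (rule exI[of _ 1], rule exI[of _ e]) (use e in simp)
  then have neK: "K \<noteq> {}" unfolding K_def by blast
  have neE: "E \<noteq> {}" unfolding E_def using r0 by (auto intro!: exI[of _ 0])
  have dis: "K \<inter> E = {}"
  proof -
    { fix z assume "z \<in> K" "z \<in> E"
      then obtain s t where "z = (s *\<^sub>R d, t)" "s > 0" "t \<le> e * s" "r (s *\<^sub>R d) \<le> ereal t"
        unfolding K_def E_def by auto
      with big[of s] have False by (meson ereal_less_eq(3) leD order.trans) }
    then show ?thesis by blast
  qed
  obtain a b where ab: "a \<noteq> 0" "\<forall>z\<in>K. inner a z \<le> b" "\<forall>z\<in>E. inner a z \<ge> b"
    using separating_hyperplane_sets[OF cK cE neK neE dis] by blast
  obtain a1 \<beta> where a: "a = (a1, \<beta>)" by (cases a)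
  have E0: "\<And>t. t \<ge> 0 \<Longrightarrow> \<beta> * t \<ge> b"
  proof -
    fix t :: real assume "t \<ge> 0"
    then have "(0, t) \<in> E" unfolding E_def using r0 by simp
    then show "\<beta> * t \<ge> b" using ab(3) a by fastforce
  qed
  have b0: "b \<le> 0" using E0[of 0] by simp
  have beta: "\<beta> \<ge> 0"
  proof (rule ccontr)
    assume "\<not> \<beta> \<ge> 0"
    then have "\<beta> < 0" by simp
    have "(b - 1) / \<beta> \<ge> 0" using \<open>\<beta> < 0\<close> b0 by (simp add: divide_nonpos_neg)
    from E0[OF this] show False using \<open>\<beta> < 0\<close> by simp
  qed
  define c where "c = inner a1 d + \<beta> * e"
  have Ks: "\<And>s. s > 0 \<Longrightarrow> s * c \<le> b"
  proof -
    fix s :: real assume "s > 0"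
    then have "(s *\<^sub>R d, e * s) \<in> K" unfolding K_def by blast
    then show "s * c \<le> b" using ab(2) a unfolding c_def by (force simp: algebra_simps)
  qed
  have c0: "c \<le> b" using Ks[of 1] by simp
  have b00: "b = 0"
  proof (rule ccontr)
    assume "b \<noteq> 0" then have "b < 0" using b0 by simp
    then have "c < 0" using c0 by simp
    have "b / (2 * c) > 0" using \<open>b < 0\<close> \<open>c < 0\<close> by (simp add: divide_neg_neg)
    from Ks[OF this] have "b / 2 \<le> b" using \<open>c < 0\<close> by (simp add: field_simps)
    then show False using \<open>b < 0\<close> by simp
  qed
  have Eh: "\<And>h. r h \<noteq> \<infinity> \<Longrightarrow> inner a1 h + \<beta> * real_of_ereal (r h) \<ge> 0"
  proof -
    fix h assume "r h \<noteq> \<infinity>"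
    moreover have "r h \<noteq> -\<infinity>" using nonneg[rule_format, of h] by auto
    ultimately have "r h = ereal (real_of_ereal (r h))" by (cases "r h") auto
    then have "(h, real_of_ereal (r h)) \<in> E" unfolding E_def by simp
    then show "inner a1 h + \<beta> * real_of_ereal (r h) \<ge> 0" using ab(3) a b00 by fastforce
  qed
  show False
  proof (cases "\<beta> = 0")
    case True
    then have a10: "a1 \<noteq> 0" using ab(1) a by (simp add: zero_prod_def)
    have "\<forall>h. ereal (inner (-a1) h) \<le> r h"
    proof
      fix h show "ereal (inner (-a1) h) \<le> r h"
      proof (cases "r h = \<infinity>")
        case False
        then have "inner a1 h \<ge> 0" using Eh[of h] True by simp
        then have "ereal (inner (-a1) h) \<le> 0" by simp
        then show ?thesis using nonneg by (meson order.trans)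
      qed simp
    qed
    then have "-a1 = 0" using uniq by blast
    then show False using a10 by simp
  next
    case False
    then have bp: "\<beta> > 0" using beta by simp
    define w where "w = (- 1 / \<beta>) *\<^sub>R a1"
    have "\<forall>h. ereal (inner w h) \<le> r h"
    proof
      fix h show "ereal (inner w h) \<le> r h"
      proof (cases "r h = \<infinity>")
        case False
        have rh: "r h = ereal (real_of_ereal (r h))"
          using False nonneg[rule_format, of h] by (cases "r h") auto
        have "inner w h = - inner a1 h / \<beta>" unfolding w_def by simp
        also have "\<dots> \<le> real_of_ereal (r h)" using Eh[OF False] bp by (simp add: field_simps)
        finally show ?thesis by (subst rh) simp
      qed simp
    qed
    then have "w = 0" using uniq by blast
    then have "a1 = 0" unfolding w_def using bp by simp
    then have "c = \<beta> * e" unfolding c_def by simp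
    then have "c > 0" using bp e by simp
    then show False using c0 b00 by simp
  qed
qed


lemma dir_bound:
  fixes r :: "'a::euclidean_space \<Rightarrow> ereal"
  assumes cvx: "convex {(h,t). r h \<le> ereal t}" and r0: "r 0 = 0"
    and nonneg: "\<forall>h. r h \<ge> 0"
    and uniq: "\<forall>w. (\<forall>h. ereal (inner w h) \<le> r h) \<longrightarrow> w = 0"
    and e: "e > 0"
  shows "\<exists>s>0. \<forall>t. 0 \<le> t \<and> t \<le> s \<longrightarrow> r (t *\<^sub>R d) \<le> ereal (e * t)"
proof -
  obtain s where s: "s > 0" "r (s *\<^sub>R d) \<le> ereal (e * s)"
    using ray_exists[OF cvx r0 nonneg uniq e] by blast
  show ?thesis
  proof (intro exI[of _ s] conjI allI impI)
    fix t assume t: "0 \<le> t \<and> t \<le> s"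
    show "r (t *\<^sub>R d) \<le> ereal (e * t)"
    proof (cases "t = 0")
      case True then show ?thesis using r0 by simp
    next
      case False then show ?thesis using ray_mono[OF cvx r0 s, of t] t by auto
    qed
  qed (rule s)
qed

lemma basis_bound:
  fixes r :: "'a::euclidean_space \<Rightarrow> ereal"
  assumes cvx: "convex {(h,t). r h \<le> ereal t}" and r0: "r 0 = 0"
    and nonneg: "\<forall>h. r h \<ge> 0"
    and uniq: "\<forall>w. (\<forall>h. ereal (inner w h) \<le> r h) \<longrightarrow> w = 0"
    and e: "e > 0"
  shows "\<exists>s>0. \<forall>i\<in>Basis. \<forall>t. \<bar>t\<bar> \<le> s \<longrightarrow> r (t *\<^sub>R i) \<le> ereal (e * \<bar>t\<bar>)"
proof -
  have "\<forall>i\<in>(Basis::'a set). \<exists>s. s > 0 \<and> (\<forall>t. \<bar>t\<bar> \<le> s \<longrightarrow> r (t *\<^sub>R i) \<le> ereal (e * \<bar>t\<bar>))"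
  proof
    fix i :: 'a
    obtain s1 where s1: "s1 > 0" "\<forall>t. 0 \<le> t \<and> t \<le> s1 \<longrightarrow> r (t *\<^sub>R i) \<le> ereal (e * t)"
      using dir_bound[OF cvx r0 nonneg uniq e] by blast
    obtain s2 where s2: "s2 > 0" "\<forall>t. 0 \<le> t \<and> t \<le> s2 \<longrightarrow> r (t *\<^sub>R (-i)) \<le> ereal (e * t)"
      using dir_bound[OF cvx r0 nonneg uniq e] by blast
    show "\<exists>s. s > 0 \<and> (\<forall>t. \<bar>t\<bar> \<le> s \<longrightarrow> r (t *\<^sub>R i) \<le> ereal (e * \<bar>t\<bar>))"
    proof (intro exI[of _ "min s1 s2"] conjI allI impI)
      fix t :: real assume t: "\<bar>t\<bar> \<le> min s1 s2"
      show "r (t *\<^sub>R i) \<le> ereal (e * \<bar>t\<bar>)"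
      proof (cases "t \<ge> 0")
        case True then show ?thesis using s1(2) t by auto
      next
        case False
        then have "r (t *\<^sub>R i) \<le> ereal (e * (-t))" using s2(2)[rule_format, of "-t"] t by simp
        then show ?thesis using False by simp
      qed
    qed (use s1 s2 in simp)
  qed
  then obtain S where S: "\<forall>i\<in>(Basis::'a set). S i > 0 \<and> (\<forall>t. \<bar>t\<bar> \<le> S i \<longrightarrow> r (t *\<^sub>R i) \<le> ereal (e * \<bar>t\<bar>))"
    by metis
  define s where "s = Min (S ` Basis)"
  have "s > 0" unfolding s_def using S by (simp add: Min_gr_iff)
  moreover have "\<forall>i\<in>Basis. s \<le> S i" unfolding s_def by simp
  ultimately show ?thesis using S by (meson order.trans)
qed

lemma cross:
  fixes r :: "'a::euclidean_space \<Rightarrow> ereal"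
  assumes cvx: "convex {(h,t). r h \<le> ereal t}" and r0: "r 0 = 0"
    and nonneg: "\<forall>h. r h \<ge> 0"
    and uniq: "\<forall>w. (\<forall>h. ereal (inner w h) \<le> r h) \<longrightarrow> w = 0"
    and e: "e > 0"
  shows "\<exists>\<delta>>0. \<forall>h. norm h < \<delta> \<longrightarrow> r h \<le> ereal (e * norm h)"
proof -
  define n where "n = real DIM('a)"
  have n: "n > 0" unfolding n_def by simp
  obtain s where s: "s > 0" "\<forall>i\<in>Basis. \<forall>t. \<bar>t\<bar> \<le> s \<longrightarrow> r (t *\<^sub>R i) \<le> ereal ((e/n) * \<bar>t\<bar>)"
    using basis_bound[OF cvx r0 nonneg uniq, of "e/n"] e n by auto
  show ?thesis
  proof (intro exI[of _ "s/n"] conjI allI impI)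
    show "s / n > 0" using s n by simp
    fix h :: 'a assume h: "norm h < s/n"
    define E where "E = {(h,t). r h \<le> ereal t}"
    define y where "y i = ((n * inner h i) *\<^sub>R i, (e/n) * \<bar>n * inner h i\<bar>)" for i
    have mem: "y i \<in> E" if i: "i \<in> Basis" for i
    proof -
      have "\<bar>n * inner h i\<bar> = n * \<bar>inner h i\<bar>" using n by (simp add: abs_mult)
      also have "\<dots> \<le> n * norm h" using Basis_le_norm[OF i, of h] n by simp
      also have "\<dots> \<le> s" using h n by (simp add: field_simps)
      finally show ?thesis using s(2) i unfolding y_def E_def by auto
    qed
    have "(\<Sum>i\<in>Basis. (1/n) *\<^sub>R y i) \<in> E"
      by (rule convex_sum[OF finite_Basis]) (use cvx mem n in \<open>auto simp: E_def n_def\<close>)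
    moreover have "fst (\<Sum>i\<in>Basis. (1/n) *\<^sub>R y i) = h"
    proof -
      have "fst (\<Sum>i\<in>Basis. (1/n) *\<^sub>R y i) = (\<Sum>i\<in>Basis. inner h i *\<^sub>R i)"
        unfolding fst_sum y_def using n by simp
      then show ?thesis by (simp add: euclidean_representation)
    qed
    moreover have "snd (\<Sum>i\<in>Basis. (1/n) *\<^sub>R y i) = (e/n) * (\<Sum>i\<in>Basis. \<bar>inner h i\<bar>)"
      unfolding snd_sum y_def using n by (simp add: sum_distrib_left abs_mult)
    moreover have "(\<Sum>i\<in>(Basis::'a set). \<bar>inner h i\<bar>) \<le> n * norm h"
      using sum_bounded_above[of Basis "\<lambda>i. \<bar>inner h i\<bar>" "norm h"] Basis_le_norm unfolding n_def by auto
    ultimately have "r h \<le> ereal ((e/n) * (n * norm h))"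
      unfolding E_def using e n
      by (smt (verit, ccfv_SIG) case_prod_beta divide_pos_pos ereal_less_eq(3) mem_Collect_eq mult_left_mono order.trans)
    then show "r h \<le> ereal (e * norm h)" using n by simp
  qed
qed


lemma ereal_minus_le_real: "(z - ereal a \<le> ereal t) \<longleftrightarrow> (z \<le> ereal (a + t))"
  by (cases z) (auto simp: algebra_simps)

lemma ereal_le_minus_real: "(ereal t \<le> z - ereal a) \<longleftrightarrow> (ereal (a + t) \<le> z)"
  by (cases z) (auto simp: algebra_simps)

lemma conv_diff:
  fixes psi :: "'a::euclidean_space \<Rightarrow> ereal"
  assumes cvx: "ereal_convex psi" and px: "psi x = ereal c"
    and sub: "\<forall>y. psi y \<ge> ereal (c + inner w0 (y - x))"
    and uniq: "\<forall>w. (\<forall>y. psi y \<ge> ereal (c + inner w (y - x))) \<longrightarrow> w = w0"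
  shows "ereal_differentiable_at psi x"
proof -
  define r where "r h = psi (x + h) - ereal (c + inner w0 h)" for h
  have req: "r h \<le> ereal t \<longleftrightarrow> psi (x+h) \<le> ereal (c + inner w0 h + t)" for h t
    unfolding r_def by (rule ereal_minus_le_real)
  have cpsi: "convex {(y,t). psi y \<le> ereal t}" using cvx unfolding ereal_convex_def by simp
  have cr: "convex {(h,t). r h \<le> ereal t}"
  proof (rule convexI)
    fix p q :: "'a \<times> real" and u v :: real
    assume p: "p \<in> {(h,t). r h \<le> ereal t}" and q: "q \<in> {(h,t). r h \<le> ereal t}"
      and u: "0 \<le> u" and v: "0 \<le> v" and uv: "u + v = 1"
    obtain h1 t1 where 1: "p = (h1, t1)" by (cases p)
    obtain h2 t2 where 2: "q = (h2, t2)" by (cases q)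
    have m1: "(x + h1, c + inner w0 h1 + t1) \<in> {(y,t). psi y \<le> ereal t}" using p 1 req by simp
    have m2: "(x + h2, c + inner w0 h2 + t2) \<in> {(y,t). psi y \<le> ereal t}" using q 2 req by simp
    have "u *\<^sub>R (x + h1, c + inner w0 h1 + t1) + v *\<^sub>R (x + h2, c + inner w0 h2 + t2)
       \<in> {(y,t). psi y \<le> ereal t}" by (rule convexD[OF cpsi m1 m2 u v uv])
    moreover have "u *\<^sub>R (x + h1, c + inner w0 h1 + t1) + v *\<^sub>R (x + h2, c + inner w0 h2 + t2)
       = (x + (u *\<^sub>R h1 + v *\<^sub>R h2), c + inner w0 (u *\<^sub>R h1 + v *\<^sub>R h2) + (u * t1 + v * t2))"
    proof -
      have v': "v = 1 - u" using uv by simp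
      show ?thesis unfolding v' by (simp add: algebra_simps inner_add_right)
    qed
    ultimately have "r (u *\<^sub>R h1 + v *\<^sub>R h2) \<le> ereal (u * t1 + v * t2)" using req by simp
    then show "u *\<^sub>R p + v *\<^sub>R q \<in> {(h,t). r h \<le> ereal t}" using 1 2 by simp
  qed
  have r0: "r 0 = 0" unfolding r_def using px by simp
  have nonneg: "\<forall>h. r h \<ge> 0"
  proof
    fix h
    have "ereal (c + inner w0 h + 0) \<le> psi (x + h)" using sub[rule_format, of "x + h"] by simp
    then show "r h \<ge> 0" unfolding r_def using ereal_le_minus_real[of 0] by (metis zero_ereal_def)
  qed
  have uniq': "\<forall>w. (\<forall>h. ereal (inner w h) \<le> r h) \<longrightarrow> w = 0"
  proof (intro allI impI)
    fix w assume w: "\<forall>h. ereal (inner w h) \<le> r h"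
    have "\<forall>y. psi y \<ge> ereal (c + inner (w0 + w) (y - x))"
    proof
      fix y
      have "ereal (inner w (y - x)) \<le> r (y - x)" using w by blast
      then have "ereal (c + inner w0 (y - x) + inner w (y - x)) \<le> psi (x + (y - x))"
        unfolding r_def ereal_le_minus_real .
      then show "psi y \<ge> ereal (c + inner (w0 + w) (y - x))" by (simp add: inner_add_left add.assoc)
    qed
    then have "w0 + w = w0" using uniq by blast
    then show "w = 0" by simp
  qed
  have crs: "\<And>e. e > 0 \<Longrightarrow> \<exists>\<delta>>0. \<forall>h. norm h < \<delta> \<longrightarrow> r h \<le> ereal (e * norm h)"
    using cross[OF cr r0 nonneg uniq'] by blast
  obtain d1 where d1: "d1 > 0" "\<forall>h. norm h < d1 \<longrightarrow> r h \<le> ereal (1 * norm h)"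
    using crs[of 1] by auto
  define F where "F y = real_of_ereal (psi y)" for y
  have loc: "psi y = ereal (c + inner w0 (y - x) + real_of_ereal (r (y - x)))
      \<and> 0 \<le> real_of_ereal (r (y - x))
      \<and> F y = c + inner w0 (y - x) + real_of_ereal (r (y - x))" if y: "norm (y - x) < d1" for y
  proof -
    have a: "r (y - x) \<le> ereal (norm (y - x))" using d1(2) y by auto
    have b: "r (y - x) \<ge> 0" using nonneg by blast
    obtain \<rho> where rho: "r (y - x) = ereal \<rho>" "0 \<le> \<rho>" using a b by (cases "r (y - x)") auto
    have "psi (x + (y - x)) - ereal (c + inner w0 (y - x)) = ereal \<rho>" using rho unfolding r_def by simp
    then have "psi y = ereal (c + inner w0 (y - x) + \<rho>)" by (cases "psi y") auto
    then show ?thesis using rho unfolding F_def by simp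
  qed
  have fin: "\<forall>y\<in>ball x d1. \<bar>psi y\<bar> \<noteq> \<infinity>"
  proof
    fix y assume "y \<in> ball x d1"
    then have "norm (y - x) < d1" by (simp add: dist_norm norm_minus_commute)
    then show "\<bar>psi y\<bar> \<noteq> \<infinity>" using loc by auto
  qed
  have Fx: "F x = c" unfolding F_def px by simp
  have "(F has_derivative (\<lambda>h. inner w0 h)) (at x)"
    unfolding has_derivative_at_alt
  proof (intro conjI allI impI)
    show "bounded_linear (inner w0)" by (rule bounded_linear_inner_right)
    fix e :: real assume e: "e > 0"
    obtain d where d: "d > 0" "\<forall>h. norm h < d \<longrightarrow> r h \<le> ereal (e * norm h)" using crs[OF e] by auto
    show "\<exists>d>0. \<forall>y. norm (y - x) < d \<longrightarrow> norm (F y - F x - inner w0 (y - x)) \<le> e * norm (y - x)"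
    proof (intro exI[of _ "min d d1"] conjI allI impI)
      show "min d d1 > 0" using d d1 by simp
      fix y assume y: "norm (y - x) < min d d1"
      then have l: "0 \<le> real_of_ereal (r (y - x))" "F y = c + inner w0 (y - x) + real_of_ereal (r (y - x))"
        using loc[of y] by auto
      have "r (y - x) \<le> ereal (e * norm (y - x))" using d y by auto
      then have "real_of_ereal (r (y - x)) \<le> e * norm (y - x)"
        using nonneg[rule_format, of "y - x"] by (cases "r (y - x)") auto
      moreover have eq: "F y - F x - inner w0 (y - x) = real_of_ereal (r (y - x))" using l Fx by simp
      ultimately show "norm (F y - F x - inner w0 (y - x)) \<le> e * norm (y - x)"
        unfolding eq real_norm_def using abs_of_nonneg[OF l(1)] by linarith
    qed
  qed
  then have "F differentiable (at x)" by (rule differentiableI)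
  then show ?thesis unfolding ereal_differentiable_at_def F_def using fin d1 by blast
qed


lemma diff_uniq:
  fixes phi :: "'a::euclidean_space \<Rightarrow> ereal"
  assumes d: "ereal_differentiable_at phi x" and px: "phi x = ereal c" and k: "k \<ge> 0"
    and s1: "\<forall>y. phi y \<ge> ereal (c + inner v1 (y - x) - k * (norm (y - x))\<^sup>2)"
    and s2: "\<forall>y. phi y \<ge> ereal (c + inner v2 (y - x) - k * (norm (y - x))\<^sup>2)"
  shows "v1 = v2"
proof -
  obtain e where e: "e > 0" "\<forall>y\<in>ball x e. \<bar>phi y\<bar> \<noteq> \<infinity>"
    and dd: "(\<lambda>y. real_of_ereal (phi y)) differentiable (at x)"
    using d unfolding ereal_differentiable_at_def by blast
  obtain D where D: "((\<lambda>y. real_of_ereal (phi y)) has_derivative D) (at x)"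
    using dd unfolding differentiable_def by blast
  have key: "D h = inner v h" if sv: "\<forall>y. phi y \<ge> ereal (c + inner v (y - x) - k * (norm (y - x))\<^sup>2)" for v h
  proof -
    define G where "G y = real_of_ereal (phi y) - (c + inner v (y - x) - k * inner (y - x) (y - x))" for y
    have Q: "((\<lambda>y. c + inner v (y - x) - k * inner (y - x) (y - x)) has_derivative (\<lambda>h. inner v h)) (at x)"
      by (auto intro!: derivative_eq_intros)
    have GD: "(G has_derivative (\<lambda>h. D h - inner v h)) (at x)"
      unfolding G_def by (rule has_derivative_diff[OF D Q])
    have Gx: "G x = 0" unfolding G_def px by simp
    have "eventually (\<lambda>y. G x \<le> G y) (at x)"
      unfolding eventually_at
    proof (intro exI[of _ e] conjI ballI impI)
      show "e > 0" by (rule e)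
      fix y assume "y \<in> UNIV" "y \<noteq> x \<and> dist y x < e"
      then have "y \<in> ball x e" by (simp add: dist_commute)
      then have fy: "\<bar>phi y\<bar> \<noteq> \<infinity>" by (rule bspec[OF e(2)])
      have "ereal (c + inner v (y - x) - k * inner (y - x) (y - x)) \<le> phi y"
        using sv by (simp add: power2_norm_eq_inner)
      then have "c + inner v (y - x) - k * inner (y - x) (y - x) \<le> real_of_ereal (phi y)"
        using fy by (cases "phi y") auto
      then show "G x \<le> G y" unfolding G_def by (simp add: px)
    qed
    from has_derivative_local_min[OF GD this] have "(\<lambda>h. D h - inner v h) = (\<lambda>h. 0)" .
    then have "D h - inner v h = 0" by metis
    then show ?thesis by simp
  qed
  have "inner v1 h = inner v2 h" for h using key[OF s1] key[OF s2] by metis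
  then have "inner (v1 - v2) (v1 - v2) = 0" by (simp add: inner_diff_left)
  then show ?thesis by simp
qed

lemma ident1:
  fixes x y v :: "'a::real_inner" assumes lam: "lam > 0"
  shows "fx + inner v (y - x) - (norm (y - x))\<^sup>2 / (2*lam) + (norm y)\<^sup>2 / (2*lam)
       = fx + (norm x)\<^sup>2 / (2*lam) + inner (v + (1/lam) *\<^sub>R x) (y - x)"
proof -
  have e1: "(norm (y - x))\<^sup>2 = (norm y)\<^sup>2 - 2 * inner x y + (norm x)\<^sup>2"
    unfolding power2_norm_eq_inner by (simp add: inner_diff_left inner_diff_right inner_commute)
  have e2: "inner (v + (1/lam) *\<^sub>R x) (y - x) = inner v (y - x) + (inner x y - (norm x)\<^sup>2) / lam"
    unfolding power2_norm_eq_inner by (simp add: inner_add_left inner_diff_right diff_divide_distrib)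
  show ?thesis unfolding e2 by (subst e1) (use lam in \<open>simp add: field_simps\<close>)
qed

lemma sqd: "(norm (a - lam *\<^sub>R v))\<^sup>2 = (norm a)\<^sup>2 - 2*lam*inner v a + lam\<^sup>2 * (norm v)\<^sup>2"
  for a v :: "'a::real_inner"
  unfolding power2_norm_eq_inner
  by (simp add: inner_diff_left inner_diff_right inner_commute power2_eq_square algebra_simps)

lemma ident2:
  fixes x u v :: "'a::real_inner" assumes lam: "lam > 0"
  shows "fx + inner v (u - x) - (norm (u - x))\<^sup>2 / (2*lam) + (norm (u - (x + lam *\<^sub>R v)))\<^sup>2 / (2*lam)
       = fx + lam * (norm v)\<^sup>2 / 2"
proof -
  have "u - (x + lam *\<^sub>R v) = (u - x) - lam *\<^sub>R v" by simp
  then have "(norm (u - (x + lam *\<^sub>R v)))\<^sup>2 = (norm (u - x))\<^sup>2 - 2*lam*inner v (u - x) + lam\<^sup>2 * (norm v)\<^sup>2"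
    using sqd by metis
  then show ?thesis using lam by (simp add: field_simps power2_eq_square)
qed

lemma ident3:
  fixes y u :: "'a::real_inner" assumes lam: "lam > 0"
  shows "t - (norm y)\<^sup>2 / (2*lam) + (norm (u - y))\<^sup>2 / (2*lam)
       = t + (norm u)\<^sup>2 / (2*lam) - inner ((1/lam) *\<^sub>R u) y"
proof -
  have e: "(norm (u - y))\<^sup>2 = (norm u)\<^sup>2 - 2 * inner u y + (norm y)\<^sup>2"
    unfolding power2_norm_eq_inner by (simp add: inner_diff_left inner_diff_right inner_commute)
  show ?thesis by (subst e) (use lam in \<open>simp add: field_simps\<close>)
qed
lemma ereal_swap: "(k::ereal) \<le> z + ereal a \<Longrightarrow> -z \<le> -k + ereal a"
  by (cases k; cases z) auto

lemma ereal_add_real_le: "(z + ereal b \<le> ereal t) \<longleftrightarrow> (z \<le> ereal (t - b))"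
  by (cases z) auto

lemma ereal_le_add_real: "(ereal a \<le> z) \<longleftrightarrow> (ereal (a + b) \<le> z + ereal b)"
  by (cases z) auto

lemma ereal_neg_le_add: "(ereal (-s) \<le> -k + ereal d) \<longleftrightarrow> (k \<le> ereal (s + d))"
  by (cases k) auto

lemma sq_deriv: "((\<lambda>y::'a::real_inner. (norm y)\<^sup>2 / (2*lam)) has_derivative (\<lambda>h. (1/(2*lam)) * (inner x h + inner h x))) (at x)"
proof -
  have "(\<lambda>y::'a. (norm y)\<^sup>2 / (2*lam)) = (\<lambda>y. (1/(2*lam)) * inner y y)"
    by (simp add: power2_norm_eq_inner)
  moreover have "((\<lambda>y. (1/(2*lam)) * inner y y) has_derivative (\<lambda>h. (1/(2*lam)) * (inner x h + inner h x))) (at x)"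
    by (intro has_derivative_mult_right has_derivative_inner[OF has_derivative_ident has_derivative_ident])
  ultimately show ?thesis by simp
qed

lemma a1: "\<bar>(psi::ereal)\<bar> \<noteq> \<infinity> \<Longrightarrow> psi = phi + ereal p \<Longrightarrow> \<bar>phi\<bar> \<noteq> \<infinity>"
  by (cases phi) simp_all
lemma a2: "\<bar>(psi::ereal)\<bar> \<noteq> \<infinity> \<Longrightarrow> psi = phi + ereal p \<Longrightarrow> real_of_ereal psi - p = real_of_ereal phi"
  by (cases phi) simp_all

lemma ediff_shift:
  fixes phi :: "'a::real_normed_vector \<Rightarrow> ereal"
  assumes d: "ereal_differentiable_at psi x" and eq: "\<forall>y. psi y = phi y + ereal (p y)"
    and pd: "(p has_derivative P) (at x)"
  shows "ereal_differentiable_at phi x"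
proof -
  obtain e where e: "e > 0" "\<forall>y\<in>ball x e. \<bar>psi y\<bar> \<noteq> \<infinity>"
    and dd: "(\<lambda>y. real_of_ereal (psi y)) differentiable (at x)"
    using d unfolding ereal_differentiable_at_def by blast
  obtain D where D: "((\<lambda>y. real_of_ereal (psi y)) has_derivative D) (at x)"
    using dd unfolding differentiable_def by blast
  have fin: "\<bar>phi y\<bar> \<noteq> \<infinity>" if "y \<in> ball x e" for y
  proof -
    have "\<bar>psi y\<bar> \<noteq> \<infinity>" by (rule bspec[OF e(2) that])
    then show ?thesis by (rule a1[OF _ eq[rule_format, of y]])
  qed
  have eqr: "real_of_ereal (psi y) - p y = real_of_ereal (phi y)" if "y \<in> ball x e" for y
  proof -
    have "\<bar>psi y\<bar> \<noteq> \<infinity>" by (rule bspec[OF e(2) that])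
    then show ?thesis by (rule a2[OF _ eq[rule_format, of y]])
  qed
  have der: "((\<lambda>y. real_of_ereal (psi y) - p y) has_derivative (\<lambda>h. D h - P h)) (at x)"
    by (rule has_derivative_diff[OF D pd])
  have xin: "x \<in> ball x e" using e(1) by simp
  have "((\<lambda>y. real_of_ereal (phi y)) has_derivative (\<lambda>h. D h - P h)) (at x)"
    by (rule has_derivative_transform_within_open[of "\<lambda>y. real_of_ereal (psi y) - p y" "\<lambda>h. D h - P h"
       x UNIV "ball x e" "\<lambda>y. real_of_ereal (phi y)", OF der open_ball xin eqr])
  then have dphi: "(\<lambda>y. real_of_ereal (phi y)) differentiable (at x)" by (rule differentiableI)
  have ex: "\<exists>e>0. \<forall>y\<in>ball x e. \<bar>phi y\<bar> \<noteq> \<infinity>"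
  proof (intro exI[of _ e] conjI ballI)
    show "e > 0" by (rule e(1))
    fix y assume "y \<in> ball x e" then show "\<bar>phi y\<bar> \<noteq> \<infinity>" by (rule fin)
  qed
  show ?thesis unfolding ereal_differentiable_at_def by (rule conjI[OF ex dphi])
qed
lemma ereal_neg_mono: "ereal c \<le> z \<Longrightarrow> - z \<le> ereal (- c)"
  by (cases z) auto

lemma ereal_neg_mono2: "z \<le> ereal a \<Longrightarrow> ereal (- a) \<le> - z"
  by (cases z) auto

lemma ereal_neg_iff: "(- z \<le> ereal s) \<longleftrightarrow> (ereal (-s) \<le> z)"
  by (cases z) auto

theorem mainTheorem7:
  fixes f :: "'a::euclidean_space \<Rightarrow> ereal" and lam :: real and x :: 'a
  assumes "proper_fun f" and "lsc_fun f"
    and "prox_threshold f > 0"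
    and "0 < lam" and "ereal lam < prox_threshold f"
    and "prox_subdiff lam f x \<noteq> {}"
  shows "((\<exists>v. prox_subdiff lam f x = {v}) \<longleftrightarrow>
           (ereal_differentiable_at (conv_fun (\<lambda>y. f y + ereal ((norm y)\<^sup>2 / (2 * lam)))) x \<and>
            conv_fun (\<lambda>y. f y + ereal ((norm y)\<^sup>2 / (2 * lam))) x = f x + ereal ((norm x)\<^sup>2 / (2 * lam))))
       \<and> ((\<exists>v. prox_subdiff lam f x = {v}) \<longleftrightarrow>
           (ereal_differentiable_at (prox_hull lam f) x \<and> prox_hull lam f x = f x))"
proof -
  have lam: "lam > 0" by (rule assms(4))
  define g where "g = (\<lambda>y. f y + ereal ((norm y)\<^sup>2 / (2 * lam)))"
  define S where "S = prox_subdiff lam f x"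
  obtain v0 where v0: "v0 \<in> S" using assms(6) S_def by blast
  have xdom: "x \<in> fdom f" using v0 unfolding S_def prox_subdiff_def by blast
  have fxn: "f x \<noteq> -\<infinity>" using assms(1) unfolding proper_fun_def by blast
  obtain fx where fx: "f x = ereal fx"
    using xdom fxn unfolding fdom_def by (cases "f x") auto
  define gx where "gx = fx + (norm x)\<^sup>2 / (2 * lam)"
  have gxe: "g x = ereal gx" unfolding g_def gx_def fx by simp
  define cx where "cx = (1/lam) *\<^sub>R x"
  define A where "A = {w. \<forall>y. g y \<ge> ereal (gx + inner w (y - x))}"
  have Smem: "v \<in> S \<longleftrightarrow> (\<forall>y. f y \<ge> ereal (fx + inner v (y - x) - (norm (y - x))\<^sup>2 / (2 * lam)))" for v
    unfolding S_def prox_subdiff_def using xdom by (simp add: fx add_diff_eq)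
  have SA: "v \<in> S \<longleftrightarrow> v + cx \<in> A" for v
  proof -
    have "\<forall>y. (f y \<ge> ereal (fx + inner v (y - x) - (norm (y - x))\<^sup>2 / (2 * lam)))
       \<longleftrightarrow> (g y \<ge> ereal (gx + inner (v + cx) (y - x)))"
    proof
      fix y
      show "(f y \<ge> ereal (fx + inner v (y - x) - (norm (y - x))\<^sup>2 / (2 * lam)))
       \<longleftrightarrow> (g y \<ge> ereal (gx + inner (v + cx) (y - x)))"
        unfolding g_def gx_def cx_def
        using ereal_le_add_real[of "fx + inner v (y - x) - (norm (y - x))\<^sup>2 / (2 * lam)" "f y"
            "(norm y)\<^sup>2 / (2 * lam)"] ident1[OF lam, of fx v y x] by simp
    qed
    then show ?thesis unfolding Smem A_def by simp
  qed
  have A_S: "w \<in> A \<longleftrightarrow> w - cx \<in> S" for w using SA[of "w - cx"] by simp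
  have sing_iff: "(\<exists>v. S = {v}) \<longleftrightarrow> (\<forall>w1\<in>A. \<forall>w2\<in>A. w1 = w2)"
  proof
    assume "\<exists>v. S = {v}"
    then obtain v where v: "S = {v}" by blast
    show "\<forall>w1\<in>A. \<forall>w2\<in>A. w1 = w2"
    proof (intro ballI)
      fix w1 w2 assume "w1 \<in> A" "w2 \<in> A"
      then have "w1 - cx = v" "w2 - cx = v" using A_S v by blast+
      then show "w1 = w2" by (metis diff_add_cancel)
    qed
  next
    assume u: "\<forall>w1\<in>A. \<forall>w2\<in>A. w1 = w2"
    have "S = {v0}"
    proof
      show "S \<subseteq> {v0}"
      proof
        fix v assume "v \<in> S"
        then have "v + cx \<in> A" "v0 + cx \<in> A" using SA v0 by blast+
        then have "v + cx = v0 + cx" using u by blast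
        then show "v \<in> {v0}" by simp
      qed
      show "{v0} \<subseteq> S" using v0 by simp
    qed
    then show "\<exists>v. S = {v}" by blast
  qed
  have w0A: "v0 + cx \<in> A" using SA v0 by blast
  have Asing: "\<forall>w\<in>A. w = v0 + cx" if "\<exists>v. S = {v}" using sing_iff that w0A by blast

  define C where "C = conv_fun g"
  have C_le: "C y \<le> g y" for y unfolding C_def conv_fun_def by (rule Sup_least) auto
  have C_ge: "C y \<ge> ereal (gx + inner w (y - x))" if w: "w \<in> A" for w y
  proof -
    define h where "h = (\<lambda>y. ereal (gx + inner w (y - x)))"
    have hc: "ereal_convex h"
    proof -
      have "{(y, t). h y \<le> ereal t} = {(y, t). inner w y + (gx - inner w x) \<le> t}"
        unfolding h_def by (auto simp: inner_diff_right algebra_simps)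
      then show ?thesis unfolding ereal_convex_def using convex_affine_epi by metis
    qed
    have hle: "\<forall>y. h y \<le> g y" using w unfolding A_def h_def by simp
    have "h y \<in> {h y | h. ereal_convex h \<and> (\<forall>y. h y \<le> g y)}" using hc hle by blast
    then have "h y \<le> C y" unfolding C_def conv_fun_def by (rule Sup_upper)
    then show ?thesis unfolding h_def .
  qed
  have Cx: "C x = ereal gx"
  proof (rule antisym)
    show "C x \<le> ereal gx" using C_le[of x] gxe by simp
    show "ereal gx \<le> C x" using C_ge[OF w0A, of x] by simp
  qed
  have Cconv: "ereal_convex C"
  proof -
    have "{(y, t). C y \<le> ereal t}
        = (\<Inter>h\<in>{h. ereal_convex h \<and> (\<forall>y. h y \<le> g y)}. {(y, t). h y \<le> ereal t})"
      unfolding C_def conv_fun_def by (auto simp: Sup_le_iff)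
    moreover have "convex (\<Inter>h\<in>{h. ereal_convex h \<and> (\<forall>y. h y \<le> g y)}. {(y, t). h y \<le> ereal t})"
      by (rule convex_INT) (auto simp: ereal_convex_def)
    ultimately show ?thesis unfolding ereal_convex_def by simp
  qed
  have Csub: "w \<in> A" if "\<forall>y. C y \<ge> ereal (gx + inner w (y - x))" for w
    unfolding A_def using that C_le order_trans by blast
  have part1: "(\<exists>v. S = {v}) \<longleftrightarrow> (ereal_differentiable_at C x \<and> C x = g x)"
  proof
    assume a: "\<exists>v. S = {v}"
    have "ereal_differentiable_at C x"
    proof (rule conv_diff[OF Cconv Cx])
      show "\<forall>y. C y \<ge> ereal (gx + inner (v0 + cx) (y - x))" using C_ge[OF w0A] by blast
      show "\<forall>w. (\<forall>y. C y \<ge> ereal (gx + inner w (y - x))) \<longrightarrow> w = v0 + cx"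
        using Csub Asing[OF a] by blast
    qed
    then show "ereal_differentiable_at C x \<and> C x = g x" using Cx gxe by simp
  next
    assume b: "ereal_differentiable_at C x \<and> C x = g x"
    have "\<forall>w1\<in>A. \<forall>w2\<in>A. w1 = w2"
    proof (intro ballI)
      fix w1 w2 assume w1: "w1 \<in> A" and w2: "w2 \<in> A"
      show "w1 = w2"
      proof (rule diff_uniq[OF b[THEN conjunct1] Cx, of 0])
        show "(0::real) \<le> 0" by simp
        show "\<forall>y. ereal (gx + inner w1 (y - x) - 0 * (norm (y - x))\<^sup>2) \<le> C y" using C_ge[OF w1] by simp
        show "\<forall>y. ereal (gx + inner w2 (y - x) - 0 * (norm (y - x))\<^sup>2) \<le> C y" using C_ge[OF w2] by simp
      qed
    qed
    then show "\<exists>v. S = {v}" using sing_iff by blast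
  qed

  define k where "k = moreau_env lam f"
  define H where "H = prox_hull lam f"
  define I where "I y = moreau_env lam (\<lambda>u. - k u) y" for y
  have HI: "H y = - I y" for y unfolding H_def I_def k_def prox_hull_def by simp
  have I_def': "I y = (INF u. - k u + ereal ((norm (u - y))\<^sup>2 / (2 * lam)))" for y
    unfolding I_def moreau_env_def by simp
  have k_def': "k z = (INF u. f u + ereal ((norm (u - z))\<^sup>2 / (2 * lam)))" for z
    unfolding k_def moreau_env_def by simp
  have H_le: "H y \<le> f y" for y
  proof -
    have "- f y \<le> I y" unfolding I_def'
    proof (rule INF_greatest)
      fix u
      have "k u \<le> f y + ereal ((norm (y - u))\<^sup>2 / (2 * lam))" unfolding k_def' by (rule INF_lower) simp
      then have "- f y \<le> - k u + ereal ((norm (y - u))\<^sup>2 / (2 * lam))" by (rule ereal_swap)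
      then show "- f y \<le> - k u + ereal ((norm (u - y))\<^sup>2 / (2 * lam))" by (simp add: norm_minus_commute)
    qed
    then show ?thesis unfolding HI using ereal_uminus_le_reorder by blast
  qed
  have H_ge: "H y \<ge> ereal (fx + inner v (y - x) - (norm (y - x))\<^sup>2 / (2 * lam))" if v: "v \<in> S" for v y
  proof -
    define z where "z = x + lam *\<^sub>R v"
    define cst where "cst = fx + lam * (norm v)\<^sup>2 / 2"
    have fu: "\<forall>u. f u \<ge> ereal (fx + inner v (u - x) - (norm (u - x))\<^sup>2 / (2 * lam))" using v Smem by blast
    have kz: "ereal cst \<le> k z" unfolding k_def'
    proof (rule INF_greatest)
      fix u
      have "ereal (fx + inner v (u - x) - (norm (u - x))\<^sup>2 / (2 * lam) + (norm (u - z))\<^sup>2 / (2 * lam))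
          \<le> f u + ereal ((norm (u - z))\<^sup>2 / (2 * lam))"
        using fu ereal_le_add_real by blast
      then show "ereal cst \<le> f u + ereal ((norm (u - z))\<^sup>2 / (2 * lam))"
        unfolding cst_def z_def ident2[OF lam] .
    qed
    have "I y \<le> - k z + ereal ((norm (z - y))\<^sup>2 / (2 * lam))" unfolding I_def' by (rule INF_lower) simp
    also have "\<dots> \<le> ereal (- cst) + ereal ((norm (z - y))\<^sup>2 / (2 * lam))"
    proof -
      have "- k z \<le> ereal (- cst)" using kz by (rule ereal_neg_mono)
      then show ?thesis by (rule add_right_mono)
    qed
    finally have "I y \<le> ereal (- cst + (norm (z - y))\<^sup>2 / (2 * lam))" by (simp only: plus_ereal.simps(1))
    then have "ereal (- (- cst + (norm (z - y))\<^sup>2 / (2 * lam))) \<le> H y" unfolding HI by (rule ereal_neg_mono2)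
    then have "ereal (cst - (norm (z - y))\<^sup>2 / (2 * lam)) \<le> H y" by simp
    moreover have "cst - (norm (z - y))\<^sup>2 / (2 * lam) = fx + inner v (y - x) - (norm (y - x))\<^sup>2 / (2 * lam)"
      using ident2[OF lam, of fx v y x] unfolding cst_def z_def by (simp add: norm_minus_commute)
    ultimately show ?thesis by simp
  qed
  have Hx: "H x = f x"
  proof (rule antisym)
    show "H x \<le> f x" by (rule H_le)
    show "f x \<le> H x" using H_ge[OF v0, of x] fx by simp
  qed
  define psi where "psi y = H y + ereal ((norm y)\<^sup>2 / (2 * lam))" for y
  have psi_le: "psi y \<le> g y" for y unfolding psi_def g_def using H_le by (simp add: add_right_mono)
  have psi_x: "psi x = ereal gx" unfolding psi_def Hx fx gx_def by simp
  have psi_ge: "psi y \<ge> ereal (gx + inner (v + cx) (y - x))" if v: "v \<in> S" for v y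
  proof -
    have "ereal (fx + inner v (y - x) - (norm (y - x))\<^sup>2 / (2 * lam) + (norm y)\<^sup>2 / (2 * lam)) \<le> psi y"
      unfolding psi_def using H_ge[OF v, of y] ereal_le_add_real by blast
    then show ?thesis unfolding ident1[OF lam] gx_def cx_def .
  qed
  have psi_epi: "psi y \<le> ereal t \<longleftrightarrow>
      (\<forall>u. k u \<le> ereal (t + (norm u)\<^sup>2 / (2 * lam) - inner ((1/lam) *\<^sub>R u) y))" for y t
  proof -
    have "psi y \<le> ereal t \<longleftrightarrow> H y \<le> ereal (t - (norm y)\<^sup>2 / (2 * lam))"
      unfolding psi_def by (rule ereal_add_real_le)
    also have "\<dots> \<longleftrightarrow> ereal (- (t - (norm y)\<^sup>2 / (2 * lam))) \<le> I y"
      unfolding HI by (rule ereal_neg_iff)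
    also have "\<dots> \<longleftrightarrow> (\<forall>u. ereal (- (t - (norm y)\<^sup>2 / (2 * lam))) \<le> - k u + ereal ((norm (u - y))\<^sup>2 / (2 * lam)))"
      unfolding I_def' by (simp add: le_INF_iff)
    also have "\<dots> \<longleftrightarrow> (\<forall>u. k u \<le> ereal ((t - (norm y)\<^sup>2 / (2 * lam)) + (norm (u - y))\<^sup>2 / (2 * lam)))"
      by (simp only: ereal_neg_le_add)
    also have "\<dots> \<longleftrightarrow> (\<forall>u. k u \<le> ereal (t + (norm u)\<^sup>2 / (2 * lam) - inner ((1/lam) *\<^sub>R u) y))"
      by (simp only: ident3[OF lam])
    finally show ?thesis .
  qed
  have psi_conv: "ereal_convex psi"
  proof -
    have "{(y, t). psi y \<le> ereal t}
        = (\<Inter>u\<in>UNIV. {(y, t). k u \<le> ereal (t + (norm u)\<^sup>2 / (2 * lam) - inner ((1/lam) *\<^sub>R u) y)})"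
      using psi_epi by auto
    moreover have "convex {(y, t). k u \<le> ereal (t + (norm u)\<^sup>2 / (2 * lam) - inner ((1/lam) *\<^sub>R u) y)}" for u
    proof (cases "k u")
      case (real \<kappa>)
      have "{(y, t). k u \<le> ereal (t + (norm u)\<^sup>2 / (2 * lam) - inner ((1/lam) *\<^sub>R u) y)}
          = {(y, t). inner ((1/lam) *\<^sub>R u) y + (\<kappa> - (norm u)\<^sup>2 / (2 * lam)) \<le> t}"
        using real by auto
      then show ?thesis using convex_affine_epi by metis
    next
      case PInf then show ?thesis by simp
    next
      case MInf then show ?thesis by simp
    qed
    ultimately show ?thesis unfolding ereal_convex_def by (simp add: convex_INT)
  qed
  have psi_sub: "w \<in> A" if "\<forall>y. psi y \<ge> ereal (gx + inner w (y - x))" for w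
    unfolding A_def using that psi_le order_trans by blast
  have part2: "(\<exists>v. S = {v}) \<longleftrightarrow> (ereal_differentiable_at H x \<and> H x = f x)"
  proof
    assume a: "\<exists>v. S = {v}"
    have "ereal_differentiable_at psi x"
    proof (rule conv_diff[OF psi_conv psi_x])
      show "\<forall>y. psi y \<ge> ereal (gx + inner (v0 + cx) (y - x))" using psi_ge[OF v0] by blast
      show "\<forall>w. (\<forall>y. psi y \<ge> ereal (gx + inner w (y - x))) \<longrightarrow> w = v0 + cx"
        using psi_sub Asing[OF a] by blast
    qed
    moreover have "\<forall>y. psi y = H y + ereal ((\<lambda>y. (norm y)\<^sup>2 / (2 * lam)) y)" unfolding psi_def by simp
    ultimately have "ereal_differentiable_at H x" by (rule ediff_shift[OF _ _ sq_deriv])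
    then show "ereal_differentiable_at H x \<and> H x = f x" using Hx by simp
  next
    assume c: "ereal_differentiable_at H x \<and> H x = f x"
    have Hx': "H x = ereal fx" using Hx fx by simp
    have "S = {v0}"
    proof
      show "S \<subseteq> {v0}"
      proof
        fix v assume v: "v \<in> S"
        have "v = v0"
        proof (rule diff_uniq[OF c[THEN conjunct1] Hx', of "1 / (2 * lam)"])
          show "0 \<le> 1 / (2 * lam)" using lam by simp
          show "\<forall>y. ereal (fx + inner v (y - x) - 1 / (2 * lam) * (norm (y - x))\<^sup>2) \<le> H y"
            using H_ge[OF v] by simp
          show "\<forall>y. ereal (fx + inner v0 (y - x) - 1 / (2 * lam) * (norm (y - x))\<^sup>2) \<le> H y"
            using H_ge[OF v0] by simp
        qed
        then show "v \<in> {v0}" by simp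
      qed
      show "{v0} \<subseteq> S" using v0 by simp
    qed
    then show "\<exists>v. S = {v}" by blast
  qed
  show ?thesis using part1 part2 gxe fx unfolding S_def C_def g_def H_def by simp
qed

end
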